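(* Let $\mathcal{P}=(\mathrm{Var},C)$ be a non-overlapping program and let $\varphi=\mathbb{P}_{\bowtie\lambda}(\lozenge G)$ with $\bowtie\in\{<,\leq\}$ be a safety reachability property such that $\mathcal{P}\not\models\varphi$. Then a set $E\subseteq C$ of commands is a high-level counterexample for $\mathcal{P}$ and $\varphi$ if and only if it is a program-level counterexample for $\mathcal{P}$ and $\{\varphi\}$.
   Context: Programs: a program $\mathcal{P}=(\mathrm{Var},C)$ consists of a finite set $\mathrm{Var}$ of variables, each with a finite integer range and an initial value, and a finite set $C$ of guarded commands of the form $g\to p_1:u_1+\dots+p_n:u_n$, where the guard $g$ is a Boolean expression over $\mathrm{Var}$, the $p_i$ are expressions over $\mathrm{Var}$ that evaluate to a probability distribution in every state satisfying $g$, and each update $u_i$ assigns expressions over $\mathrm{Var}$ to variables. A state is a valuation of $\mathrm{Var}$. A program is non-overlapping if no state satisfies the guards of two distinct commands. The underlying MC $[\![\mathcal{P}]\!]$ has the valuations as states, the initial valuation as initial state, and from a state $s$ in which command $g\to\sum_i p_i:u_i$ is enabled it moves to $u_i(s)$ with probability $p_i(s)$. $\mathsf{fixdl}(\mathcal{P})$ is $\mathcal{P}$ extended with a command that is enabled exactly in states where no guard holds and produces a self-loop. For $E\subseteq C$, $\mathcal{P}_{|E}=(\mathrm{Var},E)$. For $G$ a set of states (given by a predicate), $\mathcal{P}\models\mathbb{P}_{\bowtie\lambda}(\lozenge G)$ iff in $[\![\mathsf{fixdl}(\mathcal{P})]\!]$ the probability of reaching $G$ from the initial state is $\bowtie\lambda$.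 A high-level counterexample for $\mathcal{P}$ and $\varphi$ (with $\mathcal{P}\not\models\varphi$) is a set $E\subseteq C$ with $\mathsf{fixdl}(\mathcal{P}_{|E})\not\models\varphi$. A program-level counterexample for $\mathcal{P}$ and a specification $\Phi$ (with $\mathcal{P}\not\models\Phi$) is a set $E\subseteq C$ such that for every non-overlapping program $\mathcal{P}'=(\mathrm{Var},E'')$ with $E''\supseteq E$ we have $\mathsf{fixdl}(\mathcal{P}')\not\models\Phi$. *)

theory Defs
  imports Complex_Main
begin

type_synonym 'v state = "'v \<Rightarrow> int"

record 'v vardecl =
  vars :: "'v set"
  bounds :: "'v \<Rightarrow> int \<times> int"
  init :: "'v state"

text \<open>Guarded command  g -> p_1:u_1 + ... + p_n:u_n ; expressions are semantic
  functions of the state.\<close>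
record 'v command =
  guard :: "'v state \<Rightarrow> bool"
  branches :: "(('v state \<Rightarrow> real) \<times> ('v state \<Rightarrow> 'v state)) list"

type_synonym 'v program = "'v vardecl \<times> 'v command set"

definition valid_state :: "'v vardecl \<Rightarrow> 'v state \<Rightarrow> bool" where
  "valid_state D s \<longleftrightarrow>
     (\<forall>x\<in>vars D. fst (bounds D x) \<le> s x \<and> s x \<le> snd (bounds D x)) \<and>
     (\<forall>x. x \<notin> vars D \<longrightarrow> s x = 0)"

definition wf_decl :: "'v vardecl \<Rightarrow> bool" where
  "wf_decl D \<longleftrightarrow> finite (vars D) \<and> valid_state D (init D)"

definition wf_command :: "'v vardecl \<Rightarrow> 'v command \<Rightarrow> bool" where
  "wf_command D c \<longleftrightarrow>
     (\<forall>s. valid_state D s \<and> guard c s \<longrightarrow>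
        (\<forall>(p, u)\<in>set (branches c). 0 \<le> p s \<and> valid_state D (u s)) \<and>
        (\<Sum>(p, u)\<leftarrow>branches c. p s) = 1)"

definition is_program :: "'v program \<Rightarrow> bool" where
  "is_program P \<longleftrightarrow> wf_decl (fst P) \<and> finite (snd P) \<and> (\<forall>c\<in>snd P. wf_command (fst P) c)"

definition non_overlapping :: "'v program \<Rightarrow> bool" where
  "non_overlapping P \<longleftrightarrow>
     (\<forall>s. valid_state (fst P) s \<longrightarrow>
        (\<forall>c1\<in>snd P. \<forall>c2\<in>snd P. guard c1 s \<and> guard c2 s \<longrightarrow> c1 = c2))"

definition restrict :: "'v program \<Rightarrow> 'v command set \<Rightarrow> 'v program" where
  "restrict P E = (fst P, E)"

definition dl_command :: "'v command set \<Rightarrow> 'v command" where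
  "dl_command C = \<lparr>guard = (\<lambda>s. \<not> (\<exists>c\<in>C. guard c s)), branches = [(\<lambda>_. 1, id)]\<rparr>"

definition fixdl :: "'v program \<Rightarrow> 'v program" where
  "fixdl P = (fst P, insert (dl_command (snd P)) (snd P))"

text \<open>Probability of reaching G within n steps from s in the MC of a
  (non-overlapping) program with command set C.\<close>
fun reach_bounded :: "'v command set \<Rightarrow> ('v state \<Rightarrow> bool) \<Rightarrow> nat \<Rightarrow> 'v state \<Rightarrow> real" where
  "reach_bounded C G 0 s = (if G s then 1 else 0)"
| "reach_bounded C G (Suc n) s =
     (if G s then 1
      else (\<Sum>c\<in>{c\<in>C. guard c s}. \<Sum>(p, u)\<leftarrow>branches c. p s * reach_bounded C G n (u s)))"

definition reach_prob :: "'v program \<Rightarrow> ('v state \<Rightarrow> bool) \<Rightarrow> real" where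
  "reach_prob P G = (SUP n. reach_bounded (snd P) G n (init (fst P)))"

datatype cmp = Lt | Le | Gt | Ge

fun cmp_holds :: "cmp \<Rightarrow> real \<Rightarrow> real \<Rightarrow> bool" where
  "cmp_holds Lt x l = (x < l)"
| "cmp_holds Le x l = (x \<le> l)"
| "cmp_holds Gt x l = (x > l)"
| "cmp_holds Ge x l = (x \<ge> l)"

datatype 'v reach_prop = PReach cmp real "'v state \<Rightarrow> bool"

fun models :: "'v program \<Rightarrow> 'v reach_prop \<Rightarrow> bool" where
  "models P (PReach b lam G) = cmp_holds b (reach_prob (fixdl P) G) lam"

definition models_spec :: "'v program \<Rightarrow> 'v reach_prop set \<Rightarrow> bool" where
  "models_spec P \<Phi> \<longleftrightarrow> (\<forall>\<phi>\<in>\<Phi>. models P \<phi>)"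

definition high_level_cex :: "'v program \<Rightarrow> 'v reach_prop \<Rightarrow> 'v command set \<Rightarrow> bool" where
  "high_level_cex P \<phi> E \<longleftrightarrow> E \<subseteq> snd P \<and> \<not> models (fixdl (restrict P E)) \<phi>"

definition program_level_cex :: "'v program \<Rightarrow> 'v reach_prop set \<Rightarrow> 'v command set \<Rightarrow> bool" where
  "program_level_cex P \<Phi> E \<longleftrightarrow> E \<subseteq> snd P \<and>
     (\<forall>E''. E \<subseteq> E'' \<and> is_program (fst P, E'') \<and> non_overlapping (fst P, E'')
            \<longrightarrow> \<not> models_spec (fixdl (fst P, E'')) \<Phi>)"

end

theory Submission
  imports Defs
begin

lemma rb_insert_never:
  assumes "\<And>s. \<not> guard d s"
  shows "reach_bounded (insert d C) G n s = reach_bounded C G n s"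
proof (induction n arbitrary: s)
  case 0 then show ?case by simp
next
  case (Suc n)
  have "{c \<in> insert d C. guard c s} = {c \<in> C. guard c s}" using assms by auto
  then show ?case using Suc by simp
qed

lemma dl_never: "\<not> guard (dl_command (insert (dl_command E) E)) s"
  by (auto simp: dl_command_def)

lemma enabled_some:
  assumes "non_overlapping (D, E)" "valid_state D s" "c \<in> E" "guard c s"
  shows "{x \<in> insert (dl_command E) E. guard x s} = {c}"
  using assms unfolding non_overlapping_def dl_command_def by auto

lemma enabled_none:
  assumes "\<not> (\<exists>c\<in>E. guard c s)"
  shows "{x \<in> insert (dl_command E) E. guard x s} = {dl_command E}"
  using assms unfolding dl_command_def by auto

lemma rb_zero:
  assumes "\<not> (\<exists>c\<in>E. guard c s)" "\<not> G s"
  shows "reach_bounded (insert (dl_command E) E) G n s = 0"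
proof (induction n)
  case 0 then show ?case using assms by simp
next
  case (Suc n)
  show ?case using assms Suc by (subst reach_bounded.simps(2), subst enabled_none[OF assms(1)]) (simp add: dl_command_def)
qed

lemma rb_bounds:
  assumes "non_overlapping (D, E)" "\<forall>c\<in>E. wf_command D c" "valid_state D s"
  shows "0 \<le> reach_bounded (insert (dl_command E) E) G n s \<and>
         reach_bounded (insert (dl_command E) E) G n s \<le> 1"
  using assms(3)
proof (induction n arbitrary: s)
  case 0 then show ?case by simp
next
  case (Suc n)
  show ?case
  proof (cases "G s")
    case True then show ?thesis by simp
  next
    case False
    show ?thesis
    proof (cases "\<exists>c\<in>E. guard c s")
      case True
      then obtain c where c: "c \<in> E" "guard c s" by blast
      have wf: "wf_command D c" using assms(2) c by blast
      have br: "\<forall>(p, u)\<in>set (branches c). 0 \<le> p s \<and> valid_state D (u s)"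
        and one: "(\<Sum>(p, u)\<leftarrow>branches c. p s) = 1"
        using wf Suc.prems c unfolding wf_command_def by auto
      let ?f = "\<lambda>(p, u). p s * reach_bounded (insert (dl_command E) E) G n (u s)"
      have eq: "reach_bounded (insert (dl_command E) E) G (Suc n) s = (\<Sum>x\<leftarrow>branches c. ?f x)"
        using False by (subst reach_bounded.simps(2), subst enabled_some[OF assms(1) Suc.prems c]) simp
      have "0 \<le> (\<Sum>x\<leftarrow>branches c. ?f x)"
        by (rule sum_list_nonneg) (use br Suc.IH in auto)
      moreover have "(\<Sum>x\<leftarrow>branches c. ?f x) \<le> (\<Sum>(p, u)\<leftarrow>branches c. p s)"
      proof (rule sum_list_mono)
        fix x assume "x \<in> set (branches c)"
        then obtain p u where x: "x = (p, u)" "(p, u) \<in> set (branches c)" using prod.exhaust by metis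
        then have "0 \<le> p s" "valid_state D (u s)" using br by auto
        then show "?f x \<le> (case x of (p, u) \<Rightarrow> p s)"
          using x Suc.IH[of "u s"] by (auto intro: mult_left_le)
      qed
      ultimately show ?thesis using eq one by simp
    next
      case True2: False
      show ?thesis using rb_zero[where E=E and s=s and G=G and n="Suc n", OF True2 False] by simp
    qed
  qed
qed

lemma rb_mono:
  assumes "E \<subseteq> E2" "non_overlapping (D, E2)" "\<forall>c\<in>E2. wf_command D c" "valid_state D s"
  shows "reach_bounded (insert (dl_command E) E) G n s \<le> reach_bounded (insert (dl_command E2) E2) G n s"
  using assms(4)
proof (induction n arbitrary: s)
  case 0 then show ?case by simp
next
  case (Suc n)
  show ?case
  proof (cases "G s")
    case True then show ?thesis by simp
  next
    case False
    show ?thesis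
    proof (cases "\<exists>c\<in>E. guard c s")
      case True
      then obtain c where c: "c \<in> E" "guard c s" by blast
      have c2: "c \<in> E2" using c assms(1) by blast
      have no1: "non_overlapping (D, E)" using assms(1,2) unfolding non_overlapping_def by auto
      have wf: "wf_command D c" using assms(3) c2 by blast
      have br: "\<forall>(p, u)\<in>set (branches c). 0 \<le> p s \<and> valid_state D (u s)"
        using wf Suc.prems c unfolding wf_command_def by auto
      have eq1: "reach_bounded (insert (dl_command E) E) G (Suc n) s =
          (\<Sum>(p, u)\<leftarrow>branches c. p s * reach_bounded (insert (dl_command E) E) G n (u s))"
        using False by (subst reach_bounded.simps(2), subst enabled_some[OF no1 Suc.prems c]) simp
      have eq2: "reach_bounded (insert (dl_command E2) E2) G (Suc n) s =
          (\<Sum>(p, u)\<leftarrow>branches c. p s * reach_bounded (insert (dl_command E2) E2) G n (u s))"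
        using False by (subst reach_bounded.simps(2), subst enabled_some[OF assms(2) Suc.prems c2 c(2)]) simp
      show ?thesis unfolding eq1 eq2
      proof (rule sum_list_mono)
        fix x assume "x \<in> set (branches c)"
        then obtain p u where x: "x = (p, u)" "(p, u) \<in> set (branches c)" using prod.exhaust by metis
        then have "0 \<le> p s" "valid_state D (u s)" using br by auto
        then show "(case x of (p, u) \<Rightarrow> p s * reach_bounded (insert (dl_command E) E) G n (u s))
           \<le> (case x of (p, u) \<Rightarrow> p s * reach_bounded (insert (dl_command E2) E2) G n (u s))"
          using x Suc.IH[of "u s"] by (auto intro: mult_left_mono)
      qed
    next
      case True2: False
      show ?thesis using rb_zero[where E=E and s=s and G=G and n="Suc n", OF True2 False]
          rb_bounds[OF assms(2) assms(3) Suc.prems, of G "Suc n"] by simp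
    qed
  qed
qed

lemma double_fixdl:
  "reach_prob (fixdl (fixdl (D, E))) G = (SUP n. reach_bounded (insert (dl_command E) E) G n (init D))"
  unfolding reach_prob_def fixdl_def by (simp add: rb_insert_never[OF dl_never])

theorem proposition3:
  fixes P :: "'v program" and b :: cmp and lam :: real and G :: "'v state \<Rightarrow> bool"
    and E :: "'v command set"
  assumes "is_program P"
    and "non_overlapping P"
    and "b \<in> {Lt, Le}"
    and "\<not> models P (PReach b lam G)"
    and "E \<subseteq> snd P"
  shows "high_level_cex P (PReach b lam G) E \<longleftrightarrow> program_level_cex P {PReach b lam G} E"
proof
  assume h: "high_level_cex P (PReach b lam G) E"
  show "program_level_cex P {PReach b lam G} E"
    unfolding program_level_cex_def
  proof (intro conjI allI impI)
    show "E \<subseteq> snd P" by fact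
    fix E2 assume a: "E \<subseteq> E2 \<and> is_program (fst P, E2) \<and> non_overlapping (fst P, E2)"
    let ?D = "fst P"
    have wf2: "\<forall>c\<in>E2. wf_command ?D c" and vi: "valid_state ?D (init ?D)"
      using a unfolding is_program_def wf_decl_def by auto
    let ?f = "\<lambda>n. reach_bounded (insert (dl_command E) E) G n (init ?D)"
    let ?g = "\<lambda>n. reach_bounded (insert (dl_command E2) E2) G n (init ?D)"
    have bdd: "bdd_above (range ?g)"
      using rb_bounds[OF _ wf2 vi] a by (auto intro!: bdd_aboveI[of _ 1])
    have "(SUP n. ?f n) \<le> (SUP n. ?g n)"
      by (rule cSUP_mono[OF _ bdd]) (use rb_mono[OF _ _ wf2 vi] a in auto)
    moreover have "\<not> cmp_holds b (SUP n. ?f n) lam"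
      using h unfolding high_level_cex_def restrict_def by (simp add: double_fixdl)
    ultimately have "\<not> cmp_holds b (SUP n. ?g n) lam"
      using assms(3) by auto
    then show "\<not> models_spec (fixdl (fst P, E2)) {PReach b lam G}"
      unfolding models_spec_def by (simp add: double_fixdl)
  qed
next
  assume h: "program_level_cex P {PReach b lam G} E"
  have "is_program (fst P, E)" using assms(1,5) unfolding is_program_def
    by (auto intro: finite_subset)
  moreover have "non_overlapping (fst P, E)" using assms(2,5) unfolding non_overlapping_def by auto
  ultimately have "\<not> models_spec (fixdl (fst P, E)) {PReach b lam G}"
    using h unfolding program_level_cex_def by blast
  then show "high_level_cex P (PReach b lam G) E"
    using assms(5) unfolding high_level_cex_def restrict_def models_spec_def by simp
qed

end
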